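(* In the two-dimensional setting below, let $u$ be a convex piecewise linear function with node values on $G^h$ (a convex piecewise affine function whose subgradient measure is concentrated on $G^h$). For $x\in G^h\cap X$ let $R^h_x=x+[-h/2,h/2]^2$. Then $$F^h_1(x,u(x),u(x)-u(\cdot))\;\le\;\frac{-\int_{\partial u(R^h_x)}g(y)\,dy+\int_{R^h_x}f(z)\,dz}{h^2}.$$
   Context: Setting: $n=2$, $X$ is a square, $f\ge0$ on $X$ and $g\ge0$ on $\mathbb{R}^2$ are Lipschitz continuous with Lipschitz constants $L_f,L_g$. $G^h$ consists of the uniform Cartesian grid of spacing $h$ in $\bar X$ together with additional points on $\partial X$. $e_1,e_2$ are the coordinate unit vectors. Finite differences: $\mathcal D^{\pm}_{x_j}u(x)=\pm(u(x\pm he_j)-u(x))/h$, $\mathcal D^0_{x_j}u(x)=(u(x+he_j)-u(x-he_j))/(2h)$, $\mathcal D_{x_jx_j}u(x)=(u(x+he_j)+u(x-he_j)-2u(x))/h^2$, $\Delta^hu=\mathcal D_{x_1x_1}u+\mathcal D_{x_2x_2}u$. A superbase of $\mathbb{Z}^2$ is a triple $(e,e',e'')\in(\mathbb{Z}^2)^3$ with $\det(e,e')=1$ and $e+e'+e''=0$. For a fixed positive integer parameter $N$, $\mathcal A^h_x$ is the set of superbases with $x\pm he,x\pm he',x\pm he''\in G^h$ and $\|e\|_\infty,\|e'\|_\infty,\|e''\|_\infty<\sqrt N$. Let $\Delta^h_{ee}u(x)=(u(x+he)+u(x-he)-2u(x))/h^2$ and $$\det{}^h(D^2u)(x)=\min_{(e,e',e'')\in\mathcal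 A^h_x}G(\max\{\Delta^h_{ee}u(x),0\},\max\{\Delta^h_{e'e'}u(x),0\},\max\{\Delta^h_{e''e''}u(x),0\}),$$ where $G(a,b,c)=bc$ if $a\ge b+c$; $ca$ if $b\ge c+a$; $ab$ if $c\ge a+b$; and $\tfrac12(ab+bc+ca)-\tfrac14(a^2+b^2+c^2)$ otherwise. Define $g^h(\nabla u)(x)=\max\{g(\mathcal D^0_{x_1}u(x),\mathcal D^0_{x_2}u(x))+hL_g\Delta^hu(x),0\}$, $f^h(x)=\max\{f(x)-hL_f/\sqrt2,0\}$, and $F^h_1(x,u(x),u(x)-u(\cdot))=-g^h(\nabla u)(x)\det{}^h(D^2u)(x)+f^h(x)$. *)

theory Defs
  imports "HOL-Analysis.Analysis"
begin

type_synonym pt = "real \<times> real"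

definition sqX :: "real \<Rightarrow> real \<Rightarrow> real \<Rightarrow> nat \<Rightarrow> pt set" where
  "sqX a1 a2 h K = {a1 <..< a1 + real K * h} \<times> {a2 <..< a2 + real K * h}"

definition gridG :: "real \<Rightarrow> real \<Rightarrow> real \<Rightarrow> nat \<Rightarrow> pt set \<Rightarrow> pt set" where
  "gridG a1 a2 h K B =
     {(a1 + h * real i, a2 + h * real j) | i j. i \<le> K \<and> j \<le> K} \<union> B"

definition hvec :: "real \<Rightarrow> int \<times> int \<Rightarrow> pt" where
  "hvec h e = (h * of_int (fst e), h * of_int (snd e))"

definition Dee :: "real \<Rightarrow> (pt \<Rightarrow> real) \<Rightarrow> pt \<Rightarrow> int \<times> int \<Rightarrow> real" where
  "Dee h u x e = (u (x + hvec h e) + u (x - hvec h e) - 2 * u x) / h^2"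

definition D0 :: "real \<Rightarrow> (pt \<Rightarrow> real) \<Rightarrow> pt \<Rightarrow> int \<times> int \<Rightarrow> real" where
  "D0 h u x e = (u (x + hvec h e) - u (x - hvec h e)) / (2 * h)"

definition LapH :: "real \<Rightarrow> (pt \<Rightarrow> real) \<Rightarrow> pt \<Rightarrow> real" where
  "LapH h u x = Dee h u x (1, 0) + Dee h u x (0, 1)"

definition superbase :: "(int \<times> int) \<Rightarrow> (int \<times> int) \<Rightarrow> (int \<times> int) \<Rightarrow> bool" where
  "superbase e e' e'' \<longleftrightarrow>
     fst e * snd e' - snd e * fst e' = 1 \<and>
     fst e + fst e' + fst e'' = 0 \<and> snd e + snd e' + snd e'' = 0"

definition supnorm :: "int \<times> int \<Rightarrow> int" where
  "supnorm e = max \<bar>fst e\<bar> \<bar>snd e\<bar>"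

definition admissible :: "real \<Rightarrow> pt set \<Rightarrow> nat \<Rightarrow> pt \<Rightarrow> ((int \<times> int) \<times> (int \<times> int) \<times> (int \<times> int)) set" where
  "admissible h G N x = {(e, e', e''). superbase e e' e'' \<and>
     (\<forall>v \<in> {e, e', e''}. x + hvec h v \<in> G \<and> x - hvec h v \<in> G \<and> real_of_int (supnorm v) < sqrt (real N))}"

definition Gfun :: "real \<Rightarrow> real \<Rightarrow> real \<Rightarrow> real" where
  "Gfun a b c =
    (if a \<ge> b + c then b * c
     else if b \<ge> c + a then c * a
     else if c \<ge> a + b then a * b
     else (a*b + b*c + c*a) / 2 - (a^2 + b^2 + c^2) / 4)"

definition detH :: "real \<Rightarrow> pt set \<Rightarrow> nat \<Rightarrow> (pt \<Rightarrow> real) \<Rightarrow> pt \<Rightarrow> real" where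
  "detH h G N u x = Min ((\<lambda>(e, e', e''). Gfun (max (Dee h u x e) 0) (max (Dee h u x e') 0) (max (Dee h u x e'') 0))
                          ` admissible h G N x)"

definition gH :: "real \<Rightarrow> real \<Rightarrow> (pt \<Rightarrow> real) \<Rightarrow> (pt \<Rightarrow> real) \<Rightarrow> pt \<Rightarrow> real" where
  "gH h Lg g u x = max (g (D0 h u x (1, 0), D0 h u x (0, 1)) + h * Lg * LapH h u x) 0"

definition fH :: "real \<Rightarrow> real \<Rightarrow> (pt \<Rightarrow> real) \<Rightarrow> pt \<Rightarrow> real" where
  "fH h Lf f x = max (f x - h * Lf / sqrt 2) 0"

definition F1 :: "real \<Rightarrow> pt set \<Rightarrow> nat \<Rightarrow> real \<Rightarrow> real \<Rightarrow> (pt \<Rightarrow> real) \<Rightarrow> (pt \<Rightarrow> real) \<Rightarrow> (pt \<Rightarrow> real) \<Rightarrow> pt \<Rightarrow> real" where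
  "F1 h G N Lf Lg f g u x = - gH h Lg g u x * detH h G N u x + fH h Lf f x"

definition subgrad :: "pt set \<Rightarrow> (pt \<Rightarrow> real) \<Rightarrow> pt \<Rightarrow> pt set" where
  "subgrad S u x = {p. \<forall>z \<in> S. u z \<ge> u x + p \<bullet> (z - x)}"

definition subgrad_set :: "pt set \<Rightarrow> (pt \<Rightarrow> real) \<Rightarrow> pt set \<Rightarrow> pt set" where
  "subgrad_set S u E = (\<Union>x \<in> E. subgrad S u x)"

definition piecewise_affine_on :: "pt set \<Rightarrow> (pt \<Rightarrow> real) \<Rightarrow> bool" where
  "piecewise_affine_on S u \<longleftrightarrow>
     (\<exists>P. finite P \<and> S \<subseteq> \<Union>P \<and>
        (\<forall>C \<in> P. polyhedron C \<and> (\<exists>p c. \<forall>z \<in> C \<inter> S. u z = p \<bullet> z + c)))"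

definition cellR :: "real \<Rightarrow> pt \<Rightarrow> pt set" where
  "cellR h x = {fst x - h/2 .. fst x + h/2} \<times> {snd x - h/2 .. snd x + h/2}"

end

theory Submission
  imports Defs
begin


lemma emeasure_transl_real:
  fixes B :: "real set" assumes "B \<in> sets borel"
  shows "emeasure lborel ((\<lambda>x. x + c) -` B) = emeasure lborel B"
proof -
  have "emeasure lborel ((+) c -` B) = emeasure (distr lborel borel ((+) c)) B"
    using assms by (subst emeasure_distr) (auto simp: add.commute)
  also have "\<dots> = emeasure lborel B" by (simp add: lborel_distr_plus)
  finally have eq: "emeasure lborel ((+) c -` B) = emeasure lborel B" .
  have "(\<lambda>x. x + c) -` B = (+) c -` B" by (auto simp: add.commute)
  then show ?thesis using eq by simp
qed

lemma emeasure_shear_up: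
  fixes A :: "(real \<times> real) set" assumes A: "A \<in> sets borel"
  shows "emeasure lborel ((\<lambda>(x,y). (x + k*y, y)) -` A) = emeasure lborel A"
proof -
  have A': "A \<in> sets (lborel \<Otimes>\<^sub>M lborel)" using A by (simp only: lborel_prod sets_lborel)
  have m: "(\<lambda>(x,y). (x + k*y, y)) \<in> borel_measurable borel"
    by (rule borel_measurable_continuous_onI) (auto simp: case_prod_beta' intro!: continuous_intros)
  have A2: "(\<lambda>(x,y). (x + k*y, y)) -` A \<in> sets (lborel \<Otimes>\<^sub>M lborel)"
    using measurable_sets_borel[OF m A] by (simp only: lborel_prod sets_lborel)
  have "emeasure lborel ((\<lambda>(x,y). (x + k*y, y)) -` A)
      = (\<integral>\<^sup>+y. emeasure lborel ((\<lambda>x. (x, y)) -` ((\<lambda>(x,y). (x + k*y, y)) -` A)) \<partial>lborel)"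
    using lborel_pair.emeasure_pair_measure_alt2[OF A2] by (simp add: lborel_prod)
  also have "\<dots> = (\<integral>\<^sup>+y. emeasure lborel ((\<lambda>x. (x, y)) -` A) \<partial>lborel)"
  proof (rule nn_integral_cong)
    fix y
    have B: "(\<lambda>x. (x, y)) -` A \<in> sets borel"
      using measurable_sets_borel[OF _ A, of "\<lambda>x. (x,y)"] by auto
    have "(\<lambda>x. (x, y)) -` ((\<lambda>(x,y). (x + k*y, y)) -` A) = (\<lambda>x. x + k*y) -` ((\<lambda>x. (x, y)) -` A)"
      by auto
    then show "emeasure lborel ((\<lambda>x. (x, y)) -` ((\<lambda>(x,y). (x + k*y, y)) -` A)) = emeasure lborel ((\<lambda>x. (x, y)) -` A)"
      using emeasure_transl_real[OF B] by simp
  qed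
  also have "\<dots> = emeasure lborel A"
    using lborel_pair.emeasure_pair_measure_alt2[OF A'] by (simp add: lborel_prod)
  finally show ?thesis .
qed

lemma emeasure_shear_lo:
  fixes A :: "(real \<times> real) set" assumes A: "A \<in> sets borel"
  shows "emeasure lborel ((\<lambda>(x,y). (x, y + k*x)) -` A) = emeasure lborel A"
proof -
  have A': "A \<in> sets (lborel \<Otimes>\<^sub>M lborel)" using A by (simp only: lborel_prod sets_lborel)
  have m: "(\<lambda>(x,y). (x, y + k*x)) \<in> borel_measurable borel"
    by (rule borel_measurable_continuous_onI) (auto simp: case_prod_beta' intro!: continuous_intros)
  have A2: "(\<lambda>(x,y). (x, y + k*x)) -` A \<in> sets (lborel \<Otimes>\<^sub>M lborel)"
    using measurable_sets_borel[OF m A] by (simp only: lborel_prod sets_lborel)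
  have "emeasure lborel ((\<lambda>(x,y). (x, y + k*x)) -` A)
      = (\<integral>\<^sup>+x. emeasure lborel (Pair x -` ((\<lambda>(x,y). (x, y + k*x)) -` A)) \<partial>lborel)"
    using lborel.emeasure_pair_measure_alt[OF A2] by (simp add: lborel_prod)
  also have "\<dots> = (\<integral>\<^sup>+x. emeasure lborel (Pair x -` A) \<partial>lborel)"
  proof (rule nn_integral_cong)
    fix x
    have B: "Pair x -` A \<in> sets borel"
      using measurable_sets_borel[OF _ A, of "Pair x"] by auto
    have "Pair x -` ((\<lambda>(x,y). (x, y + k*x)) -` A) = (\<lambda>y. y + k*x) -` (Pair x -` A)"
      by auto
    then show "emeasure lborel (Pair x -` ((\<lambda>(x,y). (x, y + k*x)) -` A)) = emeasure lborel (Pair x -` A)"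
      using emeasure_transl_real[OF B] by simp
  qed
  also have "\<dots> = emeasure lborel A"
    using lborel.emeasure_pair_measure_alt[OF A'] by (simp add: lborel_prod)
  finally show ?thesis .
qed

definition mpres :: "(real \<times> real \<Rightarrow> real \<times> real) \<Rightarrow> bool" where
  "mpres f \<longleftrightarrow> f \<in> borel_measurable borel \<and> (\<forall>A \<in> sets borel. emeasure lborel (f -` A) = emeasure lborel A)"

lemma mpres_comp: "mpres f \<Longrightarrow> mpres g \<Longrightarrow> mpres (f \<circ> g)"
  unfolding mpres_def
  by (auto simp: vimage_comp[symmetric] measurable_sets_borel intro: measurable_comp)

lemma mpres_up: "mpres (\<lambda>(x,y). (x + k*y, y))"
  unfolding mpres_def using emeasure_shear_up
  by (auto intro!: borel_measurable_continuous_onI simp: case_prod_beta' intro!: continuous_intros)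

lemma mpres_lo: "mpres (\<lambda>(x,y). (x, y + k*x))"
  unfolding mpres_def using emeasure_shear_lo
  by (auto intro!: borel_measurable_continuous_onI simp: case_prod_beta' intro!: continuous_intros)

lemma mpres_unimod_c:
  assumes det: "a*d - b*c = 1" and c: "c \<noteq> 0"
  shows "mpres (\<lambda>(x,y). (a*x + b*y, c*x + d*y))"
proof -
  define s where "s = (a-1)/c"
  define t where "t = (d-1)/c"
  have "(\<lambda>(x,y). (a*x + b*y, c*x + d*y)) =
     (\<lambda>(x,y). (x + s*y, y)) \<circ> (\<lambda>(x,y). (x, y + c*x)) \<circ> (\<lambda>(x,y). (x + t*y, y))"
  proof (rule ext, clarify)
    fix x y
    have e1: "1 + s*c = a" using c by (simp add: s_def field_simps)
    have e2: "1 + c*t = d" using c by (simp add: t_def field_simps)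
    have e3: "t + s*d = b" using c det by (simp add: s_def t_def field_simps)
    show "(a*x + b*y, c*x + d*y) = ((\<lambda>(x,y). (x + s*y, y)) \<circ> (\<lambda>(x,y). (x, y + c*x)) \<circ> (\<lambda>(x,y). (x + t*y, y))) (x,y)"
      using e1 e2 e3 by (auto simp: algebra_simps)
  qed
  then show ?thesis by (simp add: mpres_comp mpres_up mpres_lo)
qed

lemma mpres_unimod:
  assumes det: "a*d - b*c = 1"
  shows "mpres (\<lambda>(x,y). (a*x + b*y, c*x + d*y))"
proof (cases "c = 0")
  case False then show ?thesis using mpres_unimod_c det by blast
next
  case True
  have "(\<lambda>(x,y). (a*x + b*y, c*x + d*y)) = (\<lambda>(x,y). ((a-b)*x + b*y, (-d)*x + d*y)) \<circ> (\<lambda>(x,y). (x, y + 1*x))"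
    using True by (auto simp: algebra_simps)
  moreover have "mpres (\<lambda>(x,y). ((a-b)*x + b*y, (-d)*x + d*y))"
    using True det by (intro mpres_unimod_c) (auto simp: algebra_simps)
  ultimately show ?thesis using mpres_comp[OF _ mpres_lo[of 1]] by presburger
qed



definition qf :: "real \<Rightarrow> real" where "qf z = (max 0 z)^2/2"

lemma qf_deriv: "z \<noteq> p \<Longrightarrow> ((\<lambda>s. qf (s - p)) has_real_derivative max 0 (z - p)) (at z)"
proof (cases "z > p")
  case True
  have d: "((\<lambda>s. (s - p)^2/2) has_real_derivative (z - p)) (at z)"
    by (auto intro!: derivative_eq_intros)
  show ?thesis
    by (rule has_field_derivative_transform_within_open[OF _ open_greaterThan, of _ _ z p])
       (use d True in \<open>auto simp: qf_def max_def\<close>)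
next
  case False
  assume "z \<noteq> p" with False have "z < p" by auto
  have d: "((\<lambda>s. 0) has_real_derivative 0) (at z)"
    by (auto intro!: derivative_eq_intros)
  show ?thesis
    by (rule has_field_derivative_transform_within_open[OF _ open_lessThan, of _ _ z p])
       (use d \<open>z < p\<close> in \<open>auto simp: qf_def max_def\<close>)
qed

lemma ramp_has_integral:
  assumes "a \<le> b"
  shows "((\<lambda>s. max 0 (s - p)) has_integral (qf (b-p) - qf (a-p))) {a..b}"
proof -
  have "((\<lambda>s. max 0 (s - p)) has_integral ((\<lambda>s. qf (s-p)) b - (\<lambda>s. qf (s-p)) a)) {a..b}"
  proof (rule fundamental_theorem_of_calculus_interior_strong[where S="{p}"])
    show "finite {p}" by simp
    show "a \<le> b" by fact
    show "((\<lambda>s. qf (s - p)) has_vector_derivative max 0 (x - p)) (at x)" if "x \<in> {a<..<b} - {p}" for x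
      using qf_deriv[of x p] that by (simp add: has_real_derivative_iff_has_vector_derivative)
    show "continuous_on {a..b} (\<lambda>s. qf (s - p))"
      unfolding qf_def by (intro continuous_intros) auto
  qed
  then show ?thesis by simp
qed

lemma arith_case1:
  fixes A m M :: real
  assumes "0 \<le> A" "0 \<le> m" "m \<le> M" "A \<le> M - m"
  shows "qf ((M+m+A)/2) - qf ((M+m-A)/2) - qf ((M-m+A)/2) + qf ((M-m-A)/2) - qf ((A+m-M)/2) + qf ((m-M-A)/2) + qf ((A-M-m)/2) = A * m"
proof -
  have "qf ((A+m-M)/2) = 0" "qf ((m-M-A)/2) = 0" "qf ((A-M-m)/2) = 0" using assms by (auto simp: qf_def max_def)
  moreover have "qf ((M+m+A)/2) = ((M+m+A)/2)^2/2" "qf ((M+m-A)/2) = ((M+m-A)/2)^2/2"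
     "qf ((M-m+A)/2) = ((M-m+A)/2)^2/2" "qf ((M-m-A)/2) = ((M-m-A)/2)^2/2" using assms by (auto simp: qf_def max_def)
  ultimately show ?thesis by (simp add: power2_eq_square field_simps)
qed

lemma arith_case2:
  fixes A m M :: real
  assumes "0 \<le> A" "0 \<le> m" "m \<le> M" "M - m \<le> A" "A \<le> M + m"
  shows "qf ((M+m+A)/2) - qf ((M+m-A)/2) - qf ((M-m+A)/2) + qf ((M-m-A)/2) - qf ((A+m-M)/2) + qf ((m-M-A)/2) + qf ((A-M-m)/2) = (A*M + M*m + m*A)/2 - (A^2+M^2+m^2)/4"
proof -
  have "qf ((M-m-A)/2) = 0" "qf ((m-M-A)/2) = 0" "qf ((A-M-m)/2) = 0" using assms by (auto simp: qf_def max_def)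
  moreover have "qf ((M+m+A)/2) = ((M+m+A)/2)^2/2" "qf ((M+m-A)/2) = ((M+m-A)/2)^2/2"
     "qf ((M-m+A)/2) = ((M-m+A)/2)^2/2" "qf ((A+m-M)/2) = ((A+m-M)/2)^2/2" using assms by (auto simp: qf_def max_def)
  ultimately show ?thesis by (simp add: power2_eq_square field_simps)
qed

lemma arith_case3:
  fixes A m M :: real
  assumes "0 \<le> A" "0 \<le> m" "m \<le> M" "M + m \<le> A"
  shows "qf ((M+m+A)/2) - qf ((M+m-A)/2) - qf ((M-m+A)/2) + qf ((M-m-A)/2) - qf ((A+m-M)/2) + qf ((m-M-A)/2) + qf ((A-M-m)/2) = M * m"
proof -
  have "qf ((M-m-A)/2) = 0" "qf ((m-M-A)/2) = 0" "qf ((M+m-A)/2) = 0" using assms by (auto simp: qf_def max_def)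
  moreover have "qf ((M+m+A)/2) = ((M+m+A)/2)^2/2" "qf ((A-M-m)/2) = ((A-M-m)/2)^2/2"
     "qf ((M-m+A)/2) = ((M-m+A)/2)^2/2" "qf ((A+m-M)/2) = ((A+m-M)/2)^2/2" using assms by (auto simp: qf_def max_def)
  ultimately show ?thesis by (simp add: power2_eq_square field_simps)
qed

lemma Gfun_sym: "0 \<le> a \<Longrightarrow> Gfun a b c = Gfun a c b"
  by (auto simp: Gfun_def algebra_simps)

lemma G_case1: "0 \<le> A \<Longrightarrow> 0 \<le> m \<Longrightarrow> m \<le> M \<Longrightarrow> A \<le> M - m \<Longrightarrow> Gfun A M m = A * m"
  by (auto simp: Gfun_def)
lemma G_case2: "0 \<le> A \<Longrightarrow> 0 \<le> m \<Longrightarrow> m \<le> M \<Longrightarrow> M - m \<le> A \<Longrightarrow> A \<le> M + m \<Longrightarrow>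
   Gfun A M m = (A*M + M*m + m*A)/2 - (A^2+M^2+m^2)/4"
  by (auto simp: Gfun_def power2_eq_square field_simps)
lemma G_case3: "0 \<le> A \<Longrightarrow> 0 \<le> m \<Longrightarrow> m \<le> M \<Longrightarrow> M + m \<le> A \<Longrightarrow> Gfun A M m = M * m"
  by (auto simp: Gfun_def)

definition trap :: "real \<Rightarrow> real \<Rightarrow> real \<Rightarrow> real \<Rightarrow> real" where
  "trap B C p s = max 0 (min (min B C) (min (s - p) (p + B + C - s)))"

lemma trap_decomp:
  assumes "0 \<le> B" "0 \<le> C"
  shows "trap B C p s = max 0 (s-p) - max 0 (s - (p + min B C)) - max 0 (s - (p + max B C)) + max 0 (s - (p + B + C))"
  using assms unfolding trap_def by (auto simp: min_def max_def)

lemma trap_cont: "continuous_on S (trap B C p)"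
  unfolding trap_def by (intro continuous_intros)

lemma trap_centered:
  assumes A: "0 \<le> A" and B: "0 \<le> B" and C: "0 \<le> C"
  shows "(trap B C p has_integral Gfun A B C) {p + (B+C)/2 - A/2 .. p + (B+C)/2 + A/2}"
proof -
  define a where "a = p + (B+C)/2 - A/2"
  define b where "b = p + (B+C)/2 + A/2"
  define m where "m = min B C"
  define M where "M = max B C"
  have ab: "a \<le> b" using A by (simp add: a_def b_def)
  have BC: "B + C = M + m" by (simp add: m_def M_def min_def max_def)
  have mM: "0 \<le> m" "m \<le> M" using B C by (auto simp: m_def M_def)
  have hi: "((\<lambda>s. max 0 (s-p) - max 0 (s - (p + m)) - max 0 (s - (p + M)) + max 0 (s - (p + B + C))) has_integral
     ((qf (b-p) - qf (a-p)) - (qf (b-(p+m)) - qf (a-(p+m))) - (qf (b-(p+M)) - qf (a-(p+M))) + (qf (b-(p+B+C)) - qf (a-(p+B+C))))) {a..b}"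
    by (intro has_integral_add has_integral_diff ramp_has_integral ab)
  have fe: "(\<lambda>s. max 0 (s-p) - max 0 (s - (p + m)) - max 0 (s - (p + M)) + max 0 (s - (p + B + C))) = trap B C p"
    using trap_decomp[OF B C] by (auto simp: m_def M_def)
  have q0: "qf (a-(p+B+C)) = 0" using A B C by (simp add: qf_def a_def max_def field_simps)
  have e1: "b - p = (M+m+A)/2" "a - p = (M+m-A)/2" "b-(p+m) = (M-m+A)/2" "a-(p+m) = (M-m-A)/2"
    "b-(p+M) = (A+m-M)/2" "a-(p+M) = (m-M-A)/2" "b-(p+B+C) = (A-M-m)/2"
    using BC by (simp_all add: a_def b_def field_simps)
  have ar: "qf ((M+m+A)/2) - qf ((M+m-A)/2) - qf ((M-m+A)/2) + qf ((M-m-A)/2) - qf ((A+m-M)/2) + qf ((m-M-A)/2) + qf ((A-M-m)/2) = Gfun A M m"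
  proof -
    consider "A \<le> M - m" | "M - m \<le> A" "A \<le> M + m" | "M + m \<le> A" by linarith
    then show ?thesis
    proof cases
      case 1 then show ?thesis using arith_case1[OF A mM 1] G_case1[OF A mM 1] by simp
    next
      case 2 then show ?thesis using arith_case2[OF A mM 2] G_case2[OF A mM 2] by simp
    next
      case 3 then show ?thesis using arith_case3[OF A mM 3] G_case3[OF A mM 3] by simp
    qed
  qed
  have gs: "Gfun A M m = Gfun A B C"
    using Gfun_sym[OF A] by (cases "B \<le> C") (auto simp: m_def M_def min_def max_def)
  have "((qf (b-p) - qf (a-p)) - (qf (b-(p+m)) - qf (a-(p+m))) - (qf (b-(p+M)) - qf (a-(p+M))) + (qf (b-(p+B+C)) - qf (a-(p+B+C)))) = Gfun A B C"
    unfolding e1 q0 gs[symmetric] ar[symmetric] by simp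
  then have "(trap B C p has_integral Gfun A B C) {a..b}" using hi fe by simp
  then show ?thesis unfolding a_def b_def .
qed

lemma trap_abs: "trap B C p s = max 0 (min (min B C) ((B+C)/2 - \<bar>s - (p + (B+C)/2)\<bar>))"
  unfolding trap_def by (auto simp: abs_if min_def max_def field_simps)

lemma trap_shift:
  assumes A: "0 \<le> A" and B: "0 \<le> B" and C: "0 \<le> C"
  shows "integral {x..x+A} (trap B C p) \<le> Gfun A B C"
proof -
  define c where "c = p + (B+C)/2"
  define k where "k = trap B C p (c + A/2)"
  let ?I0 = "{c - A/2 .. c + A/2}"
  let ?I1 = "{x .. x + A}"
  have i1: "(trap B C p has_integral integral ?I1 (trap B C p)) ?I1"
    by (intro integrable_integral integrable_continuous_real trap_cont)
  have i0: "(trap B C p has_integral Gfun A B C) ?I0"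
    using trap_centered[OF A B C, of p] by (simp add: c_def)
  have k1: "((\<lambda>s. k) has_integral A * k) ?I1" using has_integral_const_real[of k x "x+A"] A by simp
  have k0: "((\<lambda>s. k) has_integral A * k) ?I0" using has_integral_const_real[of k "c - A/2" "c+A/2"] A by simp
  have L: "((\<lambda>s. if s \<in> ?I1 then trap B C p s else 0) has_integral integral ?I1 (trap B C p)) UNIV"
    unfolding has_integral_restrict_UNIV by (rule i1)
  have R: "((\<lambda>s. (if s \<in> ?I0 then trap B C p s else 0) + (if s \<in> ?I1 then k else 0) - (if s \<in> ?I0 then k else 0))
     has_integral (Gfun A B C + A * k - A * k)) UNIV"
  proof (intro has_integral_add has_integral_diff)
    show "((\<lambda>s. if s \<in> ?I0 then trap B C p s else 0) has_integral Gfun A B C) UNIV"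
      unfolding has_integral_restrict_UNIV by (rule i0)
    show "((\<lambda>s. if s \<in> ?I1 then k else 0) has_integral A * k) UNIV"
      unfolding has_integral_restrict_UNIV by (rule k1)
    show "((\<lambda>s. if s \<in> ?I0 then k else 0) has_integral A * k) UNIV"
      unfolding has_integral_restrict_UNIV by (rule k0)
  qed
  have pw: "(if s \<in> ?I1 then trap B C p s else 0) \<le> (if s \<in> ?I0 then trap B C p s else 0) + (if s \<in> ?I1 then k else 0) - (if s \<in> ?I0 then k else 0)" for s
  proof -
    have in0: "s \<in> ?I0 \<longleftrightarrow> \<bar>s - c\<bar> \<le> A/2" by (auto simp: abs_if)
    have ts: "trap B C p s = max 0 (min (min B C) ((B+C)/2 - \<bar>s - c\<bar>))" by (simp add: trap_abs c_def)
    have kk: "k = max 0 (min (min B C) ((B+C)/2 - A/2))" using A by (simp add: k_def trap_abs c_def)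
    have "s \<in> ?I0 \<Longrightarrow> k \<le> trap B C p s" using B C A unfolding in0 ts kk by (auto simp: min_def max_def)
    moreover have "s \<notin> ?I0 \<Longrightarrow> trap B C p s \<le> k" using B C A unfolding in0 ts kk by (auto simp: min_def max_def)
    moreover have "0 \<le> trap B C p s" by (simp add: trap_def)
    ultimately show ?thesis by auto
  qed
  have "integral ?I1 (trap B C p) \<le> Gfun A B C + A * k - A * k"
    by (rule has_integral_le[OF L R]) (use pw in auto)
  then show ?thesis by simp
qed

lemma region_measure:
  fixes a1 b1 a2 b2 a3 b3 :: real
  assumes "a1 \<le> b1" "a2 \<le> b2" "a3 \<le> b3"
  defines "R \<equiv> {z::real\<times>real. a1 \<le> fst z \<and> fst z \<le> b1 \<and> a2 \<le> snd z \<and> snd z \<le> b2 \<and> a3 \<le> fst z + snd z \<and> fst z + snd z \<le> b3}"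
  shows "emeasure lborel R \<le> ennreal (Gfun (b1-a1) (b2-a2) (b3-a3))"
proof -
  let ?B = "b2 - a2" and ?C = "b3 - a3" and ?p = "a3 - b2"
  have Rc: "closed R" unfolding R_def
    by (intro closed_Collect_conj closed_Collect_le continuous_intros)
  then have Rb: "R \<in> sets borel" by (rule borel_closed)
  have R': "R \<in> sets (lborel \<Otimes>\<^sub>M lborel)" using Rb by (simp only: lborel_prod sets_lborel)
  have "emeasure lborel R = (\<integral>\<^sup>+s. emeasure lborel (Pair s -` R) \<partial>lborel)"
    using lborel.emeasure_pair_measure_alt[OF R'] by (simp add: lborel_prod)
  also have "\<dots> = (\<integral>\<^sup>+s. ennreal (trap ?B ?C ?p s) * indicator {a1..b1} s \<partial>lborel)"
  proof (rule nn_integral_cong)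
    fix s
    show "emeasure lborel (Pair s -` R) = ennreal (trap ?B ?C ?p s) * indicator {a1..b1} s"
    proof (cases "a1 \<le> s \<and> s \<le> b1")
      case True
      then have "Pair s -` R = {max a2 (a3 - s) .. min b2 (b3 - s)}" by (auto simp: R_def)
      moreover have "trap ?B ?C ?p s = (if max a2 (a3 - s) \<le> min b2 (b3 - s) then min b2 (b3 - s) - max a2 (a3 - s) else 0)"
        unfolding trap_def by (auto simp: min_def max_def)
      ultimately show ?thesis using True by (simp add: emeasure_lborel_Icc_eq indicator_def)
    next
      case False
      then have "Pair s -` R = {}" by (auto simp: R_def)
      then show ?thesis using False by (simp add: indicator_def)
    qed
  qed
  also have "\<dots> = ennreal (integral {a1..b1} (trap ?B ?C ?p))"
  proof (rule nn_integral_has_integral_lebesgue')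
    show "(trap ?B ?C ?p has_integral integral {a1..b1} (trap ?B ?C ?p)) {a1..b1}"
      by (intro integrable_integral integrable_continuous_real trap_cont)
  qed (simp add: trap_def)
  also have "\<dots> \<le> ennreal (Gfun (b1-a1) ?B ?C)"
    using trap_shift[of "b1 - a1" ?B ?C a1 ?p] assms by (intro ennreal_leI) simp
  finally show ?thesis .
qed

lemma hex_measure:
  fixes e1 e2 f1 f2 l1 u1 l2 u2 l3 u3 :: real
  assumes det: "e1*f2 - e2*f1 = 1" and "l1 \<le> u1" "l2 \<le> u2" "l3 \<le> u3"
  defines "H \<equiv> {p::real\<times>real. l1 \<le> e1* fst p + e2* snd p \<and> e1* fst p + e2* snd p \<le> u1 \<and>
                    l2 \<le> f1* fst p + f2* snd p \<and> f1* fst p + f2* snd p \<le> u2 \<and>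
                    l3 \<le> (e1+f1)* fst p + (e2+f2)* snd p \<and> (e1+f1)* fst p + (e2+f2)* snd p \<le> u3}"
  shows "emeasure lborel H \<le> ennreal (Gfun (u1-l1) (u2-l2) (u3-l3))"
proof -
  define R where "R \<equiv> {z::real\<times>real. l1 \<le> fst z \<and> fst z \<le> u1 \<and> l2 \<le> snd z \<and> snd z \<le> u2 \<and> l3 \<le> fst z + snd z \<and> fst z + snd z \<le> u3}"
  have Rc: "closed R" unfolding R_def
    by (intro closed_Collect_conj closed_Collect_le continuous_intros)
  then have Rb: "R \<in> sets borel" by (rule borel_closed)
  have "H = (\<lambda>(x,y). (e1*x + e2*y, f1*x + f2*y)) -` R"
    unfolding H_def R_def by (auto simp: algebra_simps)
  then have "emeasure lborel H = emeasure lborel R"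
    using mpres_unimod[OF det] Rb unfolding mpres_def by auto
  also have "\<dots> \<le> ennreal (Gfun (u1-l1) (u2-l2) (u3-l3))"
    unfolding R_def by (rule region_measure) (use assms in auto)
  finally show ?thesis .
qed



lemma Gfun_nonneg:
  assumes "0 \<le> a" "0 \<le> b" "0 \<le> c" shows "0 \<le> Gfun a b c"
proof -
  have id: "(a*b + b*c + c*a) / 2 - (a^2 + b^2 + c^2) / 4 =
     ((b+c-a)*(c+a-b) + (c+a-b)*(a+b-c) + (a+b-c)*(b+c-a))/4"
    by (simp add: power2_eq_square field_simps)
  show ?thesis
  proof (cases "a \<ge> b + c \<or> b \<ge> c + a \<or> c \<ge> a + b")
    case True then show ?thesis using assms by (auto simp: Gfun_def)
  next
    case False
    then have "0 < b+c-a" "0 < c+a-b" "0 < a+b-c" by auto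
    then have "0 \<le> ((b+c-a)*(c+a-b) + (c+a-b)*(a+b-c) + (a+b-c)*(b+c-a))/4"
      by (simp add: add_nonneg_nonneg)
    moreover have "Gfun a b c = (a*b + b*c + c*a) / 2 - (a^2 + b^2 + c^2) / 4"
      using False unfolding Gfun_def by auto
    ultimately show ?thesis using id by linarith
  qed
qed

lemma Gfun_scale:
  assumes "0 < h" shows "Gfun (h*a) (h*b) (h*c) = h^2 * Gfun a b c"
proof -
  have c1: "(h*a \<ge> h*b + h*c) = (a \<ge> b + c)" "(h*b \<ge> h*c + h*a) = (b \<ge> c + a)" "(h*c \<ge> h*a + h*b) = (c \<ge> a + b)"
    using assms by (simp_all add: distrib_left[symmetric])
  show ?thesis unfolding Gfun_def c1 by (simp add: power2_eq_square field_simps)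
qed

lemma sqrt_le_self_nat: "1 \<le> N \<Longrightarrow> sqrt (real N) \<le> real N"
proof -
  assume "1 \<le> N"
  then have "real N \<le> real N ^ 2" by (simp add: power2_eq_square)
  then have "sqrt (real N) \<le> sqrt (real N ^ 2)" by (rule real_sqrt_le_mono)
  then show ?thesis by simp
qed

lemma one_less_sqrt: "2 \<le> N \<Longrightarrow> 1 < sqrt (real N)"
  by (simp add: real_less_rsqrt)

lemma cen_bound:
  fixes h a M m :: real
  assumes h: "0 < h" and "h*a \<le> M" "- (h*a) \<le> m"
  shows "\<bar>a - (M - m)/(2*h)\<bar> \<le> h * ((M+m)/h^2) / 2" and "0 \<le> (M+m)/h^2"
proof -
  have e: "h * ((M+m)/h^2) / 2 = (M+m)/(2*h)" using h by (simp add: power2_eq_square field_simps)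
  have "a - (M - m)/(2*h) = (2*h*a - (M-m))/(2*h)" using h by (simp add: field_simps)
  moreover have "\<bar>2*h*a - (M-m)\<bar> \<le> M + m" using assms by (simp add: abs_le_iff mult.commute)
  ultimately show "\<bar>a - (M - m)/(2*h)\<bar> \<le> h * ((M+m)/h^2) / 2"
    using h unfolding e by (simp add: abs_divide divide_right_mono)
  show "0 \<le> (M+m)/h^2" using assms by simp
qed

lemma hex_measure_sub:
  fixes e1 e2 f1 f2 l1 u1 l2 u2 l3 u3 :: real
  assumes det: "e1*f2 - e2*f1 = 1" and "l1 \<le> u1" "l2 \<le> u2" "l3 \<le> u3"
  and sub: "Q \<subseteq> {p::real\<times>real. l1 \<le> e1 * fst p + e2 * snd p \<and> e1 * fst p + e2 * snd p \<le> u1 \<and>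
                    l2 \<le> f1 * fst p + f2 * snd p \<and> f1 * fst p + f2 * snd p \<le> u2 \<and>
                    l3 \<le> (e1+f1) * fst p + (e2+f2) * snd p \<and> (e1+f1) * fst p + (e2+f2) * snd p \<le> u3}" (is "Q \<subseteq> ?H")
  shows "emeasure lborel Q \<le> ennreal (Gfun (u1-l1) (u2-l2) (u3-l3))"
proof -
  have "closed ?H" by (intro closed_Collect_conj closed_Collect_le continuous_intros)
  then have "?H \<in> sets lborel" by simp
  then have "emeasure lborel Q \<le> emeasure lborel ?H" using sub by (rule emeasure_mono[rotated])
  also have "\<dots> \<le> ennreal (Gfun (u1-l1) (u2-l2) (u3-l3))"
    by (rule hex_measure) (use assms in auto)
  finally show ?thesis .
qed



theorem mainTheorem15:
  fixes a1 a2 h Lf Lg :: real and K N :: nat and B :: "pt set"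
    and f g u :: "pt \<Rightarrow> real" and x :: pt
  defines "X \<equiv> sqX a1 a2 h K"
  defines "G \<equiv> gridG a1 a2 h K B"
  assumes h_pos: "h > 0" and K_pos: "K \<ge> 1" and N_ge: "N \<ge> 2"
    and B_bdry: "B \<subseteq> frontier X" and B_fin: "finite B"
    and f_nonneg: "\<forall>z \<in> X. f z \<ge> 0" and f_lip: "Lf-lipschitz_on X f"
    and g_nonneg: "\<forall>y. g y \<ge> 0" and g_lip: "Lg-lipschitz_on UNIV g"
    and u_convex: "convex_on (closure X) u"
    and u_pwaff: "piecewise_affine_on (closure X) u"
    and u_conc: "subgrad_set (closure X) u (X - G) \<in> null_sets lebesgue"
    and x_in: "x \<in> G \<inter> X"
  shows "F1 h G N Lf Lg f g u x
           \<le> (- integral (subgrad_set (closure X) u (cellR h x)) g + integral (cellR h x) f) / h^2"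
proof -
  have Kh: "0 < real K * h" using K_pos h_pos by simp
  have Xdef: "X = {a1<..<a1 + real K * h} \<times> {a2<..<a2 + real K * h}" by (simp add: X_def sqX_def)
  have clX: "closure X = {a1..a1 + real K*h} \<times> {a2..a2 + real K*h}"
    using Kh by (simp add: Xdef closure_Times)
  have openX: "open X" by (simp add: Xdef open_Times)
  have BX: "B \<inter> X = {}" using B_bdry openX by (auto simp: frontier_def interior_open)
  have gridpt: "\<And>i j. i \<le> K \<Longrightarrow> j \<le> K \<Longrightarrow> (a1 + h * real i, a2 + h * real j) \<in> G"
    by (auto simp: G_def gridG_def)
  have GclX: "G \<subseteq> closure X"
  proof
    fix z assume "z \<in> G"
    then consider "z \<in> B" | i j where "i \<le> K" "j \<le> K" "z = (a1 + h * real i, a2 + h * real j)"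
      by (auto simp: G_def gridG_def)
    then show "z \<in> closure X"
    proof cases
      case 1 then show ?thesis using B_bdry by (auto simp: frontier_def)
    next
      case 2
      have "h * real i \<le> real K * h" "h * real j \<le> real K * h"
        using 2 h_pos by (simp_all add: mult.commute mult_right_mono)
      then show ?thesis using 2 h_pos by (simp add: clX)
    qed
  qed
  obtain i j where xij: "x = (a1 + h * real i, a2 + h * real j)" and ij: "1 \<le> i" "i < K" "1 \<le> j" "j < K"
  proof -
    have "x \<notin> B" using x_in BX by auto
    then obtain i j where ij0: "i \<le> K" "j \<le> K" "x = (a1 + h * real i, a2 + h * real j)"
      using x_in by (auto simp: G_def gridG_def)
    have "a1 < a1 + h * real i" "a1 + h * real i < a1 + real K * h"
         "a2 < a2 + h * real j" "a2 + h * real j < a2 + real K * h"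
      using x_in ij0 by (auto simp: Xdef)
    then have "0 < h * real i" "h * real i < h * real K" "0 < h * real j" "h * real j < h * real K"
      by (simp_all add: mult.commute)
    then have "0 < i" "i < K" "0 < j" "j < K" using h_pos
      by (simp_all add: zero_less_mult_iff)
    then show ?thesis using that[of i j] ij0 by auto
  qed
  have nbG: "x + hvec h (v1, v2) \<in> G" if "\<bar>v1\<bar> \<le> 1" "\<bar>v2\<bar> \<le> 1" for v1 v2 :: int
  proof -
    define i' where "i' = nat (int i + v1)"
    define j' where "j' = nat (int j + v2)"
    have ri: "real i' = real i + of_int v1" using that ij by (simp add: i'_def)
    have rj: "real j' = real j + of_int v2" using that ij by (simp add: j'_def)
    have "i' \<le> K" "j' \<le> K" using that ij by (auto simp: i'_def j'_def)
    then have "(a1 + h * real i', a2 + h * real j') \<in> G" by (rule gridpt)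
    moreover have "x + hvec h (v1, v2) = (a1 + h * real i', a2 + h * real j')"
      by (simp add: xij hvec_def ri rj algebra_simps)
    ultimately show ?thesis by simp
  qed
  have nbG': "x - hvec h (v1, v2) \<in> G" if "\<bar>v1\<bar> \<le> 1" "\<bar>v2\<bar> \<le> 1" for v1 v2 :: int
  proof -
    have eq: "x - hvec h (v1, v2) = x + hvec h (-v1, -v2)" by (simp add: hvec_def)
    show ?thesis unfolding eq by (rule nbG) (use that in auto)
  qed
  define R where "R = cellR h x"
  have ri1: "h \<le> h * real i" "h * real i + h \<le> real K * h" "h \<le> h * real j" "h * real j + h \<le> real K * h"
  proof -
    have "real i + 1 \<le> real K" "real j + 1 \<le> real K" using ij by linarith+
    then have "h * (real i + 1) \<le> h * real K" "h * (real j + 1) \<le> h * real K"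
      using h_pos by (simp_all add: mult_left_mono)
    then show "h * real i + h \<le> real K * h" "h * real j + h \<le> real K * h"
      by (simp_all add: algebra_simps)
    have "1 \<le> real i" "1 \<le> real j" using ij by simp_all
    then show "h \<le> h * real i" "h \<le> h * real j" using h_pos
      by (metis mult.right_neutral mult_left_mono less_imp_le)+
  qed
  have RX: "R \<subseteq> X"
  proof
    fix z assume "z \<in> R"
    then have "a1 + h * real i - h/2 \<le> fst z" "fst z \<le> a1 + h * real i + h/2"
      "a2 + h * real j - h/2 \<le> snd z" "snd z \<le> a2 + h * real j + h/2"
      by (auto simp: R_def cellR_def xij)
    then have "a1 < fst z" "fst z < a1 + real K * h" "a2 < snd z" "snd z < a2 + real K * h"
      using ri1 h_pos by linarith+
    then show "z \<in> X" by (simp add: Xdef mem_Times_iff)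
  qed
  have RG: "R \<inter> G \<subseteq> {x}"
  proof
    fix z assume z: "z \<in> R \<inter> G"
    then have "z \<notin> B" using RX BX by auto
    then obtain i' j' where ij': "z = (a1 + h * real i', a2 + h * real j')"
      using z by (auto simp: G_def gridG_def)
    have "\<bar>h * real i' - h * real i\<bar> \<le> h/2" "\<bar>h * real j' - h * real j\<bar> \<le> h/2"
    proof -
      have "h * real i - h / 2 \<le> h * real i'" "h * real i' \<le> h * real i + h / 2"
         "h * real j - h / 2 \<le> h * real j'" "h * real j' \<le> h * real j + h / 2"
        using z by (auto simp: R_def cellR_def xij ij')
      then show "\<bar>h * real i' - h * real i\<bar> \<le> h/2" "\<bar>h * real j' - h * real j\<bar> \<le> h/2"
        by linarith+
    qed
    then have "h * \<bar>real i' - real i\<bar> \<le> h * (1/2)" "h * \<bar>real j' - real j\<bar> \<le> h * (1/2)"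
      using h_pos by (simp_all add: abs_mult flip: right_diff_distrib)
    then have a: "\<bar>real i' - real i\<bar> \<le> 1/2" "\<bar>real j' - real j\<bar> \<le> 1/2"
      using h_pos mult_le_cancel_left_pos by blast+
    have "i' = i"
    proof (rule ccontr)
      assume "i' \<noteq> i"
      then have "i' + 1 \<le> i \<or> i + 1 \<le> i'" by linarith
      then have "real i' + 1 \<le> real i \<or> real i + 1 \<le> real i'" by (metis of_nat_1 of_nat_add of_nat_le_iff)
      then show False using a by linarith
    qed
    moreover have "j' = j"
    proof (rule ccontr)
      assume "j' \<noteq> j"
      then have "j' + 1 \<le> j \<or> j + 1 \<le> j'" by linarith
      then have "real j' + 1 \<le> real j \<or> real j + 1 \<le> real j'" by (metis of_nat_1 of_nat_add of_nat_le_iff)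
      then show False using a by linarith
    qed
    ultimately show "z \<in> {x}" by (simp add: ij' xij)
  qed
  have Rcb: "R = cbox (fst x - h/2, snd x - h/2) (fst x + h/2, snd x + h/2)"
    by (simp add: R_def cellR_def cbox_Pair_eq)
  have fcont: "continuous_on R f"
    using lipschitz_on_continuous_on[OF f_lip] RX continuous_on_subset by blast
  have fint: "f integrable_on R"
    using fcont unfolding Rcb by (rule integrable_continuous)
  have contR: "measure lborel R = h^2" using h_pos by (simp add: Rcb content_Pair power2_eq_square)
  have Lf0: "0 \<le> Lf" using f_lip by (rule lipschitz_on_nonneg)
  have fbound: "fH h Lf f x \<le> f z" if "z \<in> R" for z
  proof -
    have z0: "0 \<le> f z" using f_nonneg RX that by auto
    have xX: "x \<in> X" using x_in by auto
    have "fst x - h / 2 \<le> fst z" "fst z \<le> fst x + h / 2" "snd x - h / 2 \<le> snd z" "snd z \<le> snd x + h / 2"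
      using that by (auto simp: R_def cellR_def)
    then have "\<bar>fst x - fst z\<bar> \<le> \<bar>h/2\<bar>" "\<bar>snd x - snd z\<bar> \<le> \<bar>h/2\<bar>"
      using h_pos by linarith+
    then have sq: "(fst x - fst z)^2 \<le> (h/2)^2" "(snd x - snd z)^2 \<le> (h/2)^2"
      by (simp_all only: abs_le_square_iff)
    have "dist x z = sqrt ((fst x - fst z)^2 + (snd x - snd z)^2)"
      by (simp add: dist_prod_def dist_real_def)
    also have "\<dots> \<le> sqrt (h^2 / 2)"
      using sq by (intro real_sqrt_le_mono) (simp add: power_divide)
    also have "\<dots> = h / sqrt 2" using h_pos by (simp add: real_sqrt_divide)
    finally have dxz: "dist x z \<le> h / sqrt 2" .
    have "f x - f z \<le> dist (f x) (f z)" by (simp add: dist_real_def)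
    also have "\<dots> \<le> Lf * dist x z" using lipschitz_onD[OF f_lip xX, of z] RX that by blast
    also have "\<dots> \<le> Lf * (h / sqrt 2)" using dxz Lf0 by (rule mult_left_mono)
    finally have "f x - h * Lf / sqrt 2 \<le> f z" by (simp add: mult.commute)
    then show ?thesis using z0 by (simp add: fH_def)
  qed
  have partA: "h^2 * fH h Lf f x \<le> integral R f"
  proof -
    have "integral R (\<lambda>_. fH h Lf f x) \<le> integral R f"
      by (rule integral_le) (use fint fbound in \<open>auto simp: Rcb\<close>)
    moreover have "integral R (\<lambda>_. fH h Lf f x) = h^2 * fH h Lf f x"
      using contR unfolding Rcb by simp
    ultimately show ?thesis by simp
  qed
  define adm where "adm = admissible h G N x"
  define F where "F = (\<lambda>(e, e', e''). Gfun (max (Dee h u x e) 0) (max (Dee h u x e') 0) (max (Dee h u x e'') 0))"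
  have detH_eq: "detH h G N u x = Min (F ` adm)" by (simp add: detH_def F_def adm_def)
  have sN: "1 < sqrt (real N)" using N_ge by (rule one_less_sqrt)
  have t0: "((1,0),(0,1),(-1,-1)) \<in> adm"
    using nbG nbG' sN by (auto simp: adm_def admissible_def superbase_def supnorm_def)
  have finadm: "finite adm"
  proof -
    define V where "V = {-int N..int N} \<times> {-int N..int N}"
    have "v \<in> V" if "real_of_int (supnorm v) < sqrt (real N)" for v
    proof -
      have "real_of_int (supnorm v) < real N" using that sqrt_le_self_nat[of N] N_ge by linarith
      then have "supnorm v < int N" by linarith
      then show ?thesis by (cases v) (auto simp: V_def supnorm_def)
    qed
    then have "adm \<subseteq> V \<times> V \<times> V" by (auto simp: adm_def admissible_def)
    moreover have "finite (V \<times> V \<times> V)" by (simp add: V_def)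
    ultimately show ?thesis by (rule finite_subset)
  qed
  obtain e e' e'' where tin: "(e,e',e'') \<in> adm" and detHe: "detH h G N u x = F (e,e',e'')"
  proof -
    have "Min (F ` adm) \<in> F ` adm" using finadm t0 by (intro Min_in) auto
    then show ?thesis using that detH_eq by auto
  qed
  obtain e1 e2 f1 f2 where ee: "e = (e1,e2)" "e' = (f1,f2)" by (cases e, cases e') auto
  have sb: "superbase e e' e''" and admv: "\<forall>v\<in>{e,e',e''}. x + hvec h v \<in> G \<and> x - hvec h v \<in> G"
    using tin by (auto simp: adm_def admissible_def)
  have det1: "e1 * f2 - e2 * f1 = 1" and e3: "e'' = (-(e1+f1), -(e2+f2))"
    using sb ee by (auto simp: superbase_def prod_eq_iff)
  define Mv where "Mv v = u (x + hvec h v) - u x" for v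
  define mv where "mv v = u (x - hvec h v) - u x" for v
  define lin where "lin v p = fst p * of_int (fst v) + snd p * of_int (snd v)" for v :: "int \<times> int" and p :: pt
  define VS where "VS = {e, e', e'', (1,0), (0,1)}"
  have VSG: "x + hvec h v \<in> closure X \<and> x - hvec h v \<in> closure X" if "v \<in> VS" for v
  proof -
    have "x + hvec h v \<in> G \<and> x - hvec h v \<in> G"
      using that admv nbG[of 1 0] nbG'[of 1 0] nbG[of 0 1] nbG'[of 0 1] by (auto simp: VS_def)
    then show ?thesis using GclX by auto
  qed
  have sgb: "h * lin v p \<le> Mv v \<and> - (h * lin v p) \<le> mv v"
    if "p \<in> subgrad (closure X) u x" "v \<in> VS" for p v
  proof -
    have ip: "p \<bullet> hvec h v = h * lin v p" by (simp add: inner_prod_def hvec_def lin_def algebra_simps)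
    have ip2: "p \<bullet> (- hvec h v) = - (h * lin v p)" using ip by (simp add: inner_minus_right)
    have "u (x + hvec h v) \<ge> u x + p \<bullet> (x + hvec h v - x)"
      using that VSG[OF that(2)] by (auto simp: subgrad_def)
    moreover have "u (x - hvec h v) \<ge> u x + p \<bullet> (x - hvec h v - x)"
      using that VSG[OF that(2)] by (auto simp: subgrad_def)
    ultimately show ?thesis using ip ip2 by (simp add: Mv_def mv_def)
  qed
  define P where "P = {p. \<forall>v\<in>VS. h * lin v p \<le> Mv v \<and> - (h * lin v p) \<le> mv v}"
  have subP: "subgrad (closure X) u x \<subseteq> P" using sgb by (auto simp: P_def)
  have closedP: "closed P"
  proof -
    have "P = (\<Inter>v\<in>VS. {p. h * lin v p \<le> Mv v} \<inter> {p. - (h * lin v p) \<le> mv v})"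
      by (auto simp: P_def)
    also have "closed \<dots>"
      unfolding lin_def by (intro closed_INT ballI closed_Int closed_Collect_le continuous_intros)
    finally show ?thesis .
  qed
  have boundP: "P \<subseteq> cbox (- mv (1,0) / h, - mv (0,1) / h) (Mv (1,0) / h, Mv (0,1) / h)"
  proof
    fix p assume "p \<in> P"
    then have "h * fst p \<le> Mv (1,0)" "- (h * fst p) \<le> mv (1,0)" "h * snd p \<le> Mv (0,1)" "- (h * snd p) \<le> mv (0,1)"
      by (auto simp: P_def VS_def lin_def)
    then show "p \<in> cbox (- mv (1,0) / h, - mv (0,1) / h) (Mv (1,0) / h, Mv (0,1) / h)"
      using h_pos by (cases p) (auto simp: cbox_Pair_eq field_simps)
  qed
  have compP: "compact P"
    using closedP boundP by (meson bounded_cbox bounded_subset compact_eq_bounded_closed)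
  have Dee_eq: "Dee h u x v = (Mv v + mv v) / h^2" for v
    by (simp add: Dee_def Mv_def mv_def algebra_simps)
  have D0_eq: "D0 h u x v = (Mv v - mv v) / (2*h)" for v
    by (simp add: D0_def Mv_def mv_def algebra_simps)
  have Lg0: "0 \<le> Lg" using g_lip by (rule lipschitz_on_nonneg)
  have gbound: "g p \<le> gH h Lg g u x" if "p \<in> P" for p
  proof -
    have "h * fst p \<le> Mv (1,0)" "- (h * fst p) \<le> mv (1,0)" "h * snd p \<le> Mv (0,1)" "- (h * snd p) \<le> mv (0,1)"
      using that by (auto simp: P_def VS_def lin_def)
    note c1 = cen_bound[OF h_pos this(1,2)] and c2 = cen_bound[OF h_pos this(3,4)]
    define D where "D = (D0 h u x (1,0), D0 h u x (0,1))"
    have "dist p D = sqrt ((fst p - fst D)^2 + (snd p - snd D)^2)"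
      by (simp add: dist_prod_def dist_real_def)
    also have "\<dots> \<le> \<bar>fst p - fst D\<bar> + \<bar>snd p - snd D\<bar>" by (rule sqrt_sum_squares_le_sum_abs)
    also have "\<dots> \<le> h * Dee h u x (1,0) / 2 + h * Dee h u x (0,1) / 2"
      using c1(1) c2(1) by (simp add: D_def D0_eq Dee_eq)
    also have "\<dots> \<le> h * LapH h u x"
    proof -
      have "0 \<le> Dee h u x (1,0)" "0 \<le> Dee h u x (0,1)" using c1(2) c2(2) by (simp_all add: Dee_eq)
      then have "0 \<le> h * (Dee h u x (1,0) + Dee h u x (0,1))" using h_pos by simp
      then show ?thesis by (simp add: LapH_def algebra_simps)
    qed
    finally have dpd: "dist p D \<le> h * LapH h u x" .
    have "g p - g D \<le> dist (g p) (g D)" by (simp add: dist_real_def)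
    also have "\<dots> \<le> Lg * dist p D" using lipschitz_onD[OF g_lip, of p D] by simp
    also have "\<dots> \<le> Lg * (h * LapH h u x)" using dpd Lg0 by (rule mult_left_mono)
    finally have "g p \<le> g D + h * Lg * LapH h u x" by (simp add: algebra_simps)
    then show ?thesis by (simp add: gH_def D_def)
  qed
  have detH0: "0 \<le> detH h G N u x" unfolding detHe F_def by (simp add: Gfun_nonneg)
  have PsetsB: "P \<in> sets lborel" using closedP by simp
  have measP: "measure lebesgue P \<le> h^2 * detH h G N u x"
  proof (cases "P = {}")
    case True then show ?thesis using detH0 by simp
  next
    case False
    then obtain p0 where p0: "p0 \<in> P" by auto
    have wid: "0 \<le> Mv v + mv v" if "v \<in> VS" for v
      using p0 that by (force simp: P_def)
    define E1 where "E1 = real_of_int e1"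
    define E2 where "E2 = real_of_int e2"
    define F1 where "F1 = real_of_int f1"
    define F2 where "F2 = real_of_int f2"
    have detR: "E1 * F2 - E2 * F1 = 1"
    proof -
      have "E1 * F2 - E2 * F1 = real_of_int (e1 * f2 - e2 * f1)" by (simp add: E1_def E2_def F1_def F2_def)
      then show ?thesis using det1 by simp
    qed
    have lins: "lin e p = E1 * fst p + E2 * snd p" "lin e' p = F1 * fst p + F2 * snd p"
      "lin e'' p = - ((E1 + F1) * fst p + (E2 + F2) * snd p)" for p
      by (simp_all add: lin_def ee e3 E1_def E2_def F1_def F2_def algebra_simps)
    have inVS: "e \<in> VS" "e' \<in> VS" "e'' \<in> VS" by (simp_all add: VS_def)
    have divle: "\<And>a b. h * a \<le> b \<longleftrightarrow> a \<le> b / h" using h_pos by (simp add: pos_le_divide_eq mult.commute)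
    have divge: "- (h * a) \<le> b \<longleftrightarrow> - b / h \<le> a" for a b
    proof -
      have "- (h * a) \<le> b \<longleftrightarrow> - b \<le> a * h" by (simp add: mult.commute) linarith
      also have "\<dots> \<longleftrightarrow> - b / h \<le> a" by (rule pos_divide_le_eq[OF h_pos, symmetric])
      finally show ?thesis .
    qed
    have sub: "P \<subseteq> {p::real\<times>real. - mv e / h \<le> E1 * fst p + E2 * snd p \<and> E1 * fst p + E2 * snd p \<le> Mv e / h \<and>
                    - mv e' / h \<le> F1 * fst p + F2 * snd p \<and> F1 * fst p + F2 * snd p \<le> Mv e' / h \<and>
                    - Mv e'' / h \<le> (E1+F1) * fst p + (E2+F2) * snd p \<and> (E1+F1) * fst p + (E2+F2) * snd p \<le> mv e'' / h}"
    proof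
      fix p assume "p \<in> P"
      then have a: "h * lin v p \<le> Mv v" "- (h * lin v p) \<le> mv v" if "v \<in> VS" for v
        using that by (auto simp: P_def)
      note a1 = a[OF inVS(1)] and a2 = a[OF inVS(2)] and a3 = a[OF inVS(3)]
      show "p \<in> {p::real\<times>real. - mv e / h \<le> E1 * fst p + E2 * snd p \<and> E1 * fst p + E2 * snd p \<le> Mv e / h \<and>
                    - mv e' / h \<le> F1 * fst p + F2 * snd p \<and> F1 * fst p + F2 * snd p \<le> Mv e' / h \<and>
                    - Mv e'' / h \<le> (E1+F1) * fst p + (E2+F2) * snd p \<and> (E1+F1) * fst p + (E2+F2) * snd p \<le> mv e'' / h}"
      proof -
        have "E1 * fst p + E2 * snd p \<le> Mv e / h" using a1(1) unfolding lins divle .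
        moreover have "- mv e / h \<le> E1 * fst p + E2 * snd p" using a1(2) unfolding lins divge .
        moreover have "F1 * fst p + F2 * snd p \<le> Mv e' / h" using a2(1) unfolding lins divle .
        moreover have "- mv e' / h \<le> F1 * fst p + F2 * snd p" using a2(2) unfolding lins divge .
        moreover have "- Mv e'' / h \<le> (E1+F1) * fst p + (E2+F2) * snd p"
          using a3(1) unfolding lins mult_minus_right divge .
        moreover have "(E1+F1) * fst p + (E2+F2) * snd p \<le> mv e'' / h"
          using a3(2) unfolding lins mult_minus_right minus_minus divle .
        ultimately show ?thesis by simp
      qed
    qed
    have lu: "- mv v / h \<le> Mv v / h" if "v \<in> VS" for v
    proof -
      have "- mv v \<le> Mv v" using wid[OF that] by linarith
      then show ?thesis by (rule divide_right_mono) (use h_pos in auto)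
    qed
    have "emeasure lborel P \<le> ennreal (Gfun (Mv e / h - - mv e / h) (Mv e' / h - - mv e' / h) (mv e'' / h - - Mv e'' / h))"
      by (rule hex_measure_sub[OF detR lu[OF inVS(1)] lu[OF inVS(2)] _ sub]) (use lu[OF inVS(3)] in simp)
    also have "Gfun (Mv e / h - - mv e / h) (Mv e' / h - - mv e' / h) (mv e'' / h - - Mv e'' / h)
        = Gfun (h * Dee h u x e) (h * Dee h u x e') (h * Dee h u x e'')"
    proof -
      have w: "Mv v / h - - mv v / h = h * Dee h u x v" "mv v / h - - Mv v / h = h * Dee h u x v" for v
        using h_pos by (simp_all add: Dee_eq power2_eq_square field_simps)
      show ?thesis by (simp only: w)
    qed
    also have "\<dots> = h^2 * detH h G N u x"
    proof -
      have "0 \<le> Dee h u x v" if "v \<in> VS" for v using wid[OF that] by (simp add: Dee_eq)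
      then show ?thesis using inVS by (simp add: Gfun_scale[OF h_pos] detHe F_def)
    qed
    finally have em: "emeasure lborel P \<le> ennreal (h^2 * detH h G N u x)" .
    have fin: "emeasure lborel P \<noteq> \<infinity>" using emeasure_compact_finite[OF compP] by simp
    have "measure lebesgue P = measure lborel P" using PsetsB by simp
    moreover have "ennreal (measure lborel P) \<le> ennreal (h^2 * detH h G N u x)"
      using em fin by (simp add: emeasure_eq_ennreal_measure)
    ultimately show ?thesis using detH0 by (simp add: ennreal_le_iff)
  qed
  define S where "S = subgrad_set (closure X) u R"
  define NN where "NN = subgrad_set (closure X) u (X - G)"
  have negNN: "negligible NN" using u_conc by (simp add: NN_def negligible_iff_null_sets)
  have SsubP: "S - NN \<subseteq> P"
  proof
    fix p assume p: "p \<in> S - NN"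
    then obtain z where z: "z \<in> R" "p \<in> subgrad (closure X) u z" by (auto simp: S_def subgrad_set_def)
    show "p \<in> P"
    proof (cases "z = x")
      case True then show ?thesis using z subP by auto
    next
      case False
      then have "z \<in> X - G" using z RX RG by auto
      then have "p \<in> NN" using z by (auto simp: NN_def subgrad_set_def)
      then show ?thesis using p by auto
    qed
  qed
  have gcont: "continuous_on UNIV g" using g_lip by (rule lipschitz_on_continuous_on)
  have Plm: "P \<in> lmeasurable" using compP by (rule lmeasurable_compact)
  have gintP: "g integrable_on P"
  proof -
    let ?a = "(- mv (1,0) / h, - mv (0,1) / h)" and ?b = "(Mv (1,0) / h, Mv (0,1) / h)"
    have "g absolutely_integrable_on cbox ?a ?b"
      by (rule absolutely_integrable_continuous) (use gcont continuous_on_subset in blast)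
    then have "set_integrable lebesgue P g"
      by (rule set_integrable_subset) (use Plm boundP in auto)
    then show ?thesis by (rule set_lebesgue_integral_eq_integral(1))
  qed
  have gH0: "0 \<le> gH h Lg g u x" by (simp add: gH_def)
  have intP: "integral P g \<le> gH h Lg g u x * measure lebesgue P"
  proof -
    have "integral P g \<le> integral P (\<lambda>_. gH h Lg g u x)"
      by (rule integral_le) (use gintP integrable_on_const[OF Plm] gbound in auto)
    also have "integral P (\<lambda>_. gH h Lg g u x) = integral P (\<lambda>_. gH h Lg g u x *\<^sub>R (1::real))" by simp
    also have "\<dots> = gH h Lg g u x * measure lebesgue P"
      by (simp only: integral_cmul lmeasure_integral[OF Plm]) simp
    finally show ?thesis .
  qed
  have partB: "integral S g \<le> h^2 * gH h Lg g u x * detH h G N u x"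
  proof (cases "g integrable_on S")
    case True
    have neg1: "negligible {y \<in> S - (S - NN). g y \<noteq> 0}"
      by (rule negligible_subset[OF negNN]) auto
    have "{y \<in> (S - NN) - S. g y \<noteq> 0} = {}" by blast
    then have neg2: "negligible {y \<in> (S - NN) - S. g y \<noteq> 0}" by (simp only: negligible_empty)
    have eqi: "integral S g = integral (S - NN) g" by (rule integral_spike_set[OF neg1 neg2])
    have int2: "g integrable_on (S - NN)" by (rule integrable_spike_set[OF True neg1 neg2])
    have "integral (S - NN) g \<le> integral P g"
      by (rule integral_subset_le[OF SsubP int2 gintP]) (use g_nonneg in auto)
    also have "\<dots> \<le> gH h Lg g u x * measure lebesgue P" by (rule intP)
    also have "\<dots> \<le> gH h Lg g u x * (h^2 * detH h G N u x)" using measP gH0 by (rule mult_left_mono)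
    finally show ?thesis using eqi by (simp add: algebra_simps)
  next
    case False
    then have "integral S g = 0" by (rule not_integrable_integral)
    then show ?thesis using gH0 detH0 by simp
  qed
  have "F1 h G N Lf Lg f g u x * h^2 = - (h^2 * gH h Lg g u x * detH h G N u x) + h^2 * fH h Lf f x"
    by (simp add: F1_def algebra_simps)
  also have "\<dots> \<le> - integral S g + integral R f" using partA partB by linarith
  finally have "F1 h G N Lf Lg f g u x * h^2 \<le> - integral S g + integral R f" .
  then show ?thesis using h_pos by (simp add: pos_le_divide_eq S_def R_def)
qed

end
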